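(* Let $\mathcal{P}$ be a database program and $\Omega$ a sketch. Assume the oracle $\textsf{Verify}$ decides equivalence exactly (it returns true on $(\mathcal{P},\mathcal{P}')$ iff $\mathcal{P}\simeq\mathcal{P}'$) and, whenever $\mathcal{P}\not\simeq\mathcal{P}'$, supplies a minimum failing input. If there exists a completion $\mathcal{P}'\in\gamma(\Omega)$ with $\mathcal{P}'\simeq\mathcal{P}$, then $\textsc{CompleteSketch}(\Omega,\mathcal{P})$ returns (not $\bot$) a program $\mathcal{P}''\in\gamma(\Omega)$ with $\mathcal{P}''\simeq\mathcal{P}$.
   Context: A database program is a finite set of named functions, each either an update function (a sequence of insert/delete/update statements on database tables, parameterized by arguments) or a query function (a relational-algebra query parameterized by arguments). An invocation sequence is $\omega=(f_1,\sigma_1);\dots;(f_k,\sigma_k)$ where $f_1,\dots,f_{k-1}$ are update functions, $f_k$ is a query function, and $\sigma_i$ are arguments; $[\![\mathcal{P}]\!]_\omega$ denotes the query result of executing $\omega$ on $\mathcal{P}$ from the empty database. $\mathcal{P}\simeq\mathcal{P}'$ iff $[\![\mathcal{P}]\!]_\omega=[\![\mathcal{P}']\!]_\omega$ for all invocation sequences $\omega$. A minimum failing input for $\mathcal{P},\mathcal{P}'$ is an invocation sequence $\omega$ of minimal length with $[\![\mathcal{P}]\!]_\omega\neq[\![\mathcal{P}']\!]_\omega$. A sketch $\Omega$ is a database program (with the same function names and signatures as $\mathcal{P}$) in which finitely many holes $\textbf{??}_1,\dots,\textbf{??}_m$ occur, each hole $\textbf{??}_i$ lying inside the body of exactly one function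 and having a finite domain $\{e_i^1,\dots,e_i^{n_i}\}$ of candidate constants (tables, join chains, attributes, table lists, etc.). A completion of $\Omega$ is $\Omega[\vec e/\vec{\textbf{??}}]$ for a choice $e_i\in\{e_i^1,\dots,e_i^{n_i}\}$ for each $i$; $\gamma(\Omega)$ is the set of completions. The body of each function in a completion depends only on the values assigned to the holes occurring in that function. $\textsc{CompleteSketch}(\Omega,\mathcal{P})$: introduce Boolean variables $b_i^j$ ($b_i^j$ true iff $\textbf{??}_i$ is filled with $e_i^j$) and set $\Psi:=\bigwedge_{i=1}^m\oplus(b_i^1,\dots,b_i^{n_i})$, where $\oplus$ means exactly one argument is true. While $\Psi$ is satisfiable: take a model $\mathcal{M}$ of $\Psi$, let $\mathcal{P}'$ be the completion it encodes; if $\textsf{Verify}(\mathcal{P},\mathcal{P}')$ returns true, return $\mathcal{P}'$; otherwise obtain a minimum failing input $\omega$, let $H$ be the set of indices of holes occurring in the functions invoked in $\omega$, and set $\Psi:=\Psi\land\neg\bigwedge_{i\in H}b_i^{j_i}$ where $j_i$ is the index with $\mathcal{M}(b_i^{j_i})=\text{true}$. When $\Psi$ becomes unsatisfiable, return $\bot$. *)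

theory Defs
  imports Main
begin

text \<open>
  Update functions have names of type 'fu and
  bodies of type 'u (a sequence of insert/delete/update statements); query functions
  have names of type 'fq and bodies of type 'q (a relational-algebra query).
  The meaning of statements/queries is given by denotation functions
  updDen :: 'u => 'arg => 'db => 'db and qryDen :: 'q => 'arg => 'db => 'res,
  and execution starts from the empty database emp.
  A program assigns a body to every function name (update and query functions
  are kept apart, so a program and its completions share names and signatures).
\<close>

type_synonym ('fu, 'fq, 'u, 'q) program = "('fu \<Rightarrow> 'u) \<times> ('fq \<Rightarrow> 'q)"

text \<open>Invocation sequence (f1,s1);...;(f(k-1),s(k-1));(fk,sk): the update invocations
  and the final query invocation.\<close>
type_synonym ('fu, 'fq, 'arg) invseq = "('fu \<times> 'arg) list \<times> ('fq \<times> 'arg)"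

definition inv_length :: "('fu, 'fq, 'arg) invseq \<Rightarrow> nat" where
  "inv_length \<omega> = length (fst \<omega>) + 1"

definition exec ::
  "('u \<Rightarrow> 'arg \<Rightarrow> 'db \<Rightarrow> 'db) \<Rightarrow> ('q \<Rightarrow> 'arg \<Rightarrow> 'db \<Rightarrow> 'res) \<Rightarrow> 'db \<Rightarrow>
   ('fu, 'fq, 'u, 'q) program \<Rightarrow> ('fu, 'fq, 'arg) invseq \<Rightarrow> 'res" where
  "exec updDen qryDen emp P \<omega> =
     qryDen (snd P (fst (snd \<omega>))) (snd (snd \<omega>))
       (fold (\<lambda>(f, s) d. updDen (fst P f) s d) (fst \<omega>) emp)"

definition prog_equiv where
  "prog_equiv updDen qryDen emp P P' \<longleftrightarrow>
     (\<forall>\<omega>. exec updDen qryDen emp P \<omega> = exec updDen qryDen emp P' \<omega>)"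

definition is_min_failing where
  "is_min_failing updDen qryDen emp P P' \<omega> \<longleftrightarrow>
     exec updDen qryDen emp P \<omega> \<noteq> exec updDen qryDen emp P' \<omega> \<and>
     (\<forall>\<omega>'. inv_length \<omega>' < inv_length \<omega> \<longrightarrow>
         exec updDen qryDen emp P \<omega>' = exec updDen qryDen emp P' \<omega>')"

text \<open>
  Holes are numbered 0..<m; hole i has the finite candidate domain
  cand i = [e_i^1, ..., e_i^{n_i}] (0-based indices j < length (cand i)) and lies in the
  body of function owner i.
\<close>

definition fill ::
  "('fu \<Rightarrow> (nat \<Rightarrow> 'e) \<Rightarrow> 'u) \<Rightarrow> ('fq \<Rightarrow> (nat \<Rightarrow> 'e) \<Rightarrow> 'q) \<Rightarrow> (nat \<Rightarrow> 'e) \<Rightarrow>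
   ('fu, 'fq, 'u, 'q) program" where
  "fill skU skQ a = (\<lambda>f. skU f a, \<lambda>g. skQ g a)"

definition sketch_local ::
  "nat \<Rightarrow> (nat \<Rightarrow> 'fu + 'fq) \<Rightarrow> ('fu \<Rightarrow> (nat \<Rightarrow> 'e) \<Rightarrow> 'u) \<Rightarrow> ('fq \<Rightarrow> (nat \<Rightarrow> 'e) \<Rightarrow> 'q) \<Rightarrow> bool"
  where
  "sketch_local m owner skU skQ \<longleftrightarrow>
     (\<forall>f a a'. (\<forall>i<m. owner i = Inl f \<longrightarrow> a i = a' i) \<longrightarrow> skU f a = skU f a') \<and>
     (\<forall>g a a'. (\<forall>i<m. owner i = Inr g \<longrightarrow> a i = a' i) \<longrightarrow> skQ g a = skQ g a')"

definition completions where
  "completions m cand skU skQ =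
     {fill skU skQ a | a. \<forall>i<m. a i \<in> set (cand i)}"

text \<open>Boolean variable b_i^j is the pair (i, j); a formula is represented by its set of
  models (a predicate on valuations).\<close>
type_synonym valuation = "nat \<times> nat \<Rightarrow> bool"
type_synonym formula = "valuation \<Rightarrow> bool"

definition psi0 :: "nat \<Rightarrow> (nat \<Rightarrow> 'e list) \<Rightarrow> formula" where
  "psi0 m cand = (\<lambda>v. \<forall>i<m. \<exists>!j. j < length (cand i) \<and> v (i, j))"

definition sel :: "(nat \<Rightarrow> 'e list) \<Rightarrow> valuation \<Rightarrow> nat \<Rightarrow> nat" where
  "sel cand M i = (THE j. j < length (cand i) \<and> M (i, j))"

definition decode where
  "decode cand skU skQ M = fill skU skQ (\<lambda>i. cand i ! sel cand M i)"

definition invoked_holes :: "nat \<Rightarrow> (nat \<Rightarrow> 'fu + 'fq) \<Rightarrow> ('fu, 'fq, 'arg) invseq \<Rightarrow> nat set" where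
  "invoked_holes m owner \<omega> =
     {i. i < m \<and> owner i \<in> Inl ` fst ` set (fst \<omega>) \<union> {Inr (fst (snd \<omega>))}}"

definition block :: "(nat \<Rightarrow> 'e list) \<Rightarrow> valuation \<Rightarrow> nat set \<Rightarrow> formula \<Rightarrow> formula" where
  "block cand M H \<Psi> = (\<lambda>v. \<Psi> v \<and> \<not> (\<forall>i\<in>H. v (i, sel cand M i)))"

text \<open>
  Runs of CompleteSketch.  pick is the SAT solver (returns a model of a satisfiable
  formula), verify the equivalence oracle, mfi the oracle supplying failing inputs.
  cs_run ... Psi r  means: the loop started with formula Psi returns r
  (None = bottom, Some P' = the completion P').
\<close>
inductive cs_run for updDen qryDen emp m owner cand skU skQ pick verify mfi P where
  unsat: "\<not> (\<exists>v. \<Psi> v) \<Longrightarrow>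
     cs_run updDen qryDen emp m owner cand skU skQ pick verify mfi P \<Psi> None"
| found: "\<exists>v. \<Psi> v \<Longrightarrow> verify P (decode cand skU skQ (pick \<Psi>)) \<Longrightarrow>
     cs_run updDen qryDen emp m owner cand skU skQ pick verify mfi P \<Psi>
       (Some (decode cand skU skQ (pick \<Psi>)))"
| refine: "\<exists>v. \<Psi> v \<Longrightarrow> \<not> verify P (decode cand skU skQ (pick \<Psi>)) \<Longrightarrow>
     cs_run updDen qryDen emp m owner cand skU skQ pick verify mfi P
       (block cand (pick \<Psi>)
          (invoked_holes m owner (mfi P (decode cand skU skQ (pick \<Psi>)))) \<Psi>) r \<Longrightarrow>
     cs_run updDen qryDen emp m owner cand skU skQ pick verify mfi P \<Psi> r"

definition complete_sketch_returns where
  "complete_sketch_returns updDen qryDen emp m owner cand skU skQ pick verify mfi P r \<longleftrightarrow>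
     cs_run updDen qryDen emp m owner cand skU skQ pick verify mfi P (psi0 m cand) r"

end

theory Submission
  imports Defs
begin


definition selL :: "(nat \<Rightarrow> 'e list) \<Rightarrow> nat \<Rightarrow> valuation \<Rightarrow> nat list" where
  "selL cand m v = map (sel cand v) [0..<m]"

definition PsiQ :: "nat \<Rightarrow> (nat \<Rightarrow> 'e list) \<Rightarrow> (nat list \<Rightarrow> bool) \<Rightarrow> formula" where
  "PsiQ m cand Q = (\<lambda>v. psi0 m cand v \<and> Q (selL cand m v))"

definition cset :: "nat \<Rightarrow> (nat \<Rightarrow> 'e list) \<Rightarrow> (nat list \<Rightarrow> bool) \<Rightarrow> nat list set" where
  "cset m cand Q = {xs. length xs = m \<and> (\<forall>i<m. xs!i < length (cand i)) \<and> Q xs}"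

lemma cset_finite: "finite (cset m cand Q)"
proof -
  let ?K = "\<Sum>i<m. length (cand i)"
  have "cset m cand Q \<subseteq> {xs. set xs \<subseteq> {..<?K} \<and> length xs = m}"
  proof
    fix xs assume "xs \<in> cset m cand Q"
    hence l: "length xs = m" and b: "\<forall>i<m. xs!i < length (cand i)" by (auto simp: cset_def)
    have "set xs \<subseteq> {..<?K}"
    proof
      fix x assume "x \<in> set xs"
      then obtain i where i: "i < m" "xs!i = x" using l by (auto simp: in_set_conv_nth)
      have "length (cand i) \<le> ?K" using i(1) by (intro member_le_sum) auto
      thus "x \<in> {..<?K}" using b i by force
    qed
    thus "xs \<in> {xs. set xs \<subseteq> {..<?K} \<and> length xs = m}" using l by auto
  qed
  thus ?thesis using finite_lists_length_eq[of "{..<?K}" m] finite_subset by blast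
qed

lemma sel_prop:
  assumes "psi0 m cand v" "i < m"
  shows "sel cand v i < length (cand i) \<and> v (i, sel cand v i)"
proof -
  have "\<exists>!j. j < length (cand i) \<and> v (i, j)" using assms by (auto simp: psi0_def)
  from theI'[OF this] show ?thesis by (simp add: sel_def)
qed

lemma sel_uniq:
  assumes "psi0 m cand v" "i < m" "j < length (cand i)" "v (i, j)"
  shows "sel cand v i = j"
proof -
  have "\<exists>!j. j < length (cand i) \<and> v (i, j)" using assms by (auto simp: psi0_def)
  thus ?thesis unfolding sel_def using assms by (intro the1_equality) auto
qed

lemma exec_local:
  assumes local: "sketch_local m owner skU skQ"
    and ag: "\<forall>i<m. owner i \<in> Inl ` fst ` set (fst \<omega>) \<union> {Inr (fst (snd \<omega>))} \<longrightarrow> a i = b i"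
  shows "exec updDen qryDen emp (fill skU skQ a) \<omega> = exec updDen qryDen emp (fill skU skQ b) \<omega>"
proof -
  have q: "skQ (fst (snd \<omega>)) a = skQ (fst (snd \<omega>)) b"
    using local ag unfolding sketch_local_def by blast
  have u: "\<And>f. f \<in> fst ` set (fst \<omega>) \<Longrightarrow> skU f a = skU f b"
  proof -
    fix f assume "f \<in> fst ` set (fst \<omega>)"
    hence "\<forall>i<m. owner i = Inl f \<longrightarrow> a i = b i" using ag by auto
    thus "skU f a = skU f b" using local unfolding sketch_local_def by blast
  qed
  have "fold (\<lambda>(f, s) d. updDen (skU f a) s d) (fst \<omega>) emp =
        fold (\<lambda>(f, s) d. updDen (skU f b) s d) (fst \<omega>) emp"
  proof (rule fold_cong)
    fix x assume x: "x \<in> set (fst \<omega>)"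
    obtain f s where xe: "x = (f, s)" by (cases x)
    have "f \<in> fst ` set (fst \<omega>)" using x xe by force
    thus "(\<lambda>(f, s) d. updDen (skU f a) s d) x = (\<lambda>(f, s) d. updDen (skU f b) s d) x"
      using u xe by simp
  qed auto
  thus ?thesis using q by (simp add: exec_def fill_def)
qed

lemma block_PsiQ:
  assumes "psi0 m cand M" "H \<subseteq> {..<m}"
  shows "block cand M H (PsiQ m cand Q) =
         PsiQ m cand (\<lambda>xs. Q xs \<and> \<not> (\<forall>i\<in>H. xs!i = sel cand M i))"
proof (rule ext)
  fix v
  show "block cand M H (PsiQ m cand Q) v = PsiQ m cand (\<lambda>xs. Q xs \<and> \<not> (\<forall>i\<in>H. xs!i = sel cand M i)) v"
  proof (cases "psi0 m cand v")
    case True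
    have "\<forall>i\<in>H. v (i, sel cand M i) = (selL cand m v ! i = sel cand M i)"
    proof
      fix i assume "i \<in> H"
      hence i: "i < m" using assms by auto
      have e: "selL cand m v ! i = sel cand v i" using i by (simp add: selL_def)
      show "v (i, sel cand M i) = (selL cand m v ! i = sel cand M i)"
        using sel_prop[OF assms(1) i] sel_prop[OF True i] sel_uniq[OF True i] e by metis
    qed
    thus ?thesis using True unfolding block_def PsiQ_def by auto
  next
    case False thus ?thesis unfolding block_def PsiQ_def by auto
  qed
qed

theorem mainTheorem2:
  fixes updDen :: "'u \<Rightarrow> 'arg \<Rightarrow> 'db \<Rightarrow> 'db"
    and qryDen :: "'q \<Rightarrow> 'arg \<Rightarrow> 'db \<Rightarrow> 'res"
    and emp :: 'db
    and P :: "('fu, 'fq, 'u, 'q) program"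
    and m :: nat
    and owner :: "nat \<Rightarrow> 'fu + 'fq"
    and cand :: "nat \<Rightarrow> 'e list"
    and skU :: "'fu \<Rightarrow> (nat \<Rightarrow> 'e) \<Rightarrow> 'u"
    and skQ :: "'fq \<Rightarrow> (nat \<Rightarrow> 'e) \<Rightarrow> 'q"
    and pick :: "formula \<Rightarrow> valuation"
    and verify :: "('fu, 'fq, 'u, 'q) program \<Rightarrow> ('fu, 'fq, 'u, 'q) program \<Rightarrow> bool"
    and mfi :: "('fu, 'fq, 'u, 'q) program \<Rightarrow> ('fu, 'fq, 'u, 'q) program \<Rightarrow> ('fu, 'fq, 'arg) invseq"
  assumes local: "sketch_local m owner skU skQ"
    and pick_model: "\<And>\<Psi>. (\<exists>v. \<Psi> v) \<Longrightarrow> \<Psi> (pick \<Psi>)"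
    and verify_exact: "\<And>P'. verify P P' \<longleftrightarrow> prog_equiv updDen qryDen emp P P'"
    and mfi_min: "\<And>P'. \<not> prog_equiv updDen qryDen emp P P' \<Longrightarrow>
                     is_min_failing updDen qryDen emp P P' (mfi P P')"
    and exists_equiv: "\<exists>P' \<in> completions m cand skU skQ. prog_equiv updDen qryDen emp P' P"
  shows "(\<exists>r. complete_sketch_returns updDen qryDen emp m owner cand skU skQ pick verify mfi P r) \<and>
         (\<forall>r. complete_sketch_returns updDen qryDen emp m owner cand skU skQ pick verify mfi P r \<longrightarrow>
              (\<exists>P''. r = Some P'' \<and> P'' \<in> completions m cand skU skQ \<and>
                     prog_equiv updDen qryDen emp P'' P))"
  
proof -
  from exists_equiv obtain a where a: "\<forall>i<m. a i \<in> set (cand i)"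
    and eqa: "prog_equiv updDen qryDen emp (fill skU skQ a) P"
    by (auto simp: completions_def)
  define js where "js i = (SOME j. j < length (cand i) \<and> cand i ! j = a i)" for i
  have js: "js i < length (cand i) \<and> cand i ! js i = a i" if "i < m" for i
  proof -
    have "\<exists>j. j < length (cand i) \<and> cand i ! j = a i" using a that by (auto simp: in_set_conv_nth)
    thus ?thesis unfolding js_def by (rule someI_ex)
  qed
  define xs0 where "xs0 = map js [0..<m]"
  define v0 :: valuation where "v0 = (\<lambda>(i, j). j = js i)"
  have psi_v0: "psi0 m cand v0" unfolding psi0_def
  proof (intro allI impI)
    fix i assume "i < m"
    thus "\<exists>!j. j < length (cand i) \<and> v0 (i, j)" using js[of i] unfolding v0_def by auto
  qed
  have sel_v0: "selL cand m v0 = xs0"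
    unfolding selL_def xs0_def
    using sel_uniq[OF psi_v0] js by (intro map_cong) (auto simp: v0_def)
  let ?run = "cs_run updDen qryDen emp m owner cand skU skQ pick verify mfi P"
  let ?good = "\<lambda>r. \<exists>P''. r = Some P'' \<and> P'' \<in> completions m cand skU skQ \<and>
                     prog_equiv updDen qryDen emp P'' P"
  have main: "\<forall>Q. card (cset m cand Q) = n \<longrightarrow> Q xs0 \<longrightarrow>
     (\<exists>r. ?run (PsiQ m cand Q) r) \<and> (\<forall>r. ?run (PsiQ m cand Q) r \<longrightarrow> ?good r)" for n
  proof (induction n rule: less_induct)
    case (less n)
    show ?case
    proof (intro allI impI)
      fix Q assume cn: "card (cset m cand Q) = n" and Qx: "Q xs0"
      let ?\<Psi> = "PsiQ m cand Q"
      have sat: "\<exists>v. ?\<Psi> v" using psi_v0 sel_v0 Qx by (auto simp: PsiQ_def)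
      define M where "M = pick ?\<Psi>"
      have PM: "?\<Psi> M" using pick_model[OF sat] by (simp add: M_def)
      hence psiM: "psi0 m cand M" by (simp add: PsiQ_def)
      define PM where "PM = decode cand skU skQ M"
      have PMc: "PM \<in> completions m cand skU skQ"
      proof -
        have "\<forall>i<m. cand i ! sel cand M i \<in> set (cand i)"
          using sel_prop[OF psiM] by simp
        thus ?thesis unfolding PM_def decode_def completions_def by blast
      qed
      show "(\<exists>r. ?run ?\<Psi> r) \<and> (\<forall>r. ?run ?\<Psi> r \<longrightarrow> ?good r)"
      proof (cases "verify P PM")
        case True
        have "prog_equiv updDen qryDen emp P PM" using True verify_exact by blast
        hence "prog_equiv updDen qryDen emp PM P" unfolding prog_equiv_def by metis
        hence gd: "?good (Some PM)" using PMc by blast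
        have r1: "?run ?\<Psi> (Some PM)" unfolding PM_def M_def
          using True sat by (intro cs_run.found) (auto simp: PM_def M_def)
        have "\<forall>r. ?run ?\<Psi> r \<longrightarrow> ?good r"
        proof (intro allI impI)
          fix r assume "?run ?\<Psi> r"
          thus "?good r"
          proof (cases rule: cs_run.cases)
            case unsat thus ?thesis using sat by blast
          next
            case found thus ?thesis using gd by (simp add: PM_def M_def)
          next
            case refine thus ?thesis using True by (simp add: PM_def M_def)
          qed
        qed
        thus ?thesis using r1 by blast
      next
        case False
        define \<omega> where "\<omega> = mfi P PM"
        define H where "H = invoked_holes m owner \<omega>"
        have Hm: "H \<subseteq> {..<m}" by (auto simp: H_def invoked_holes_def)
        define Q' where "Q' = (\<lambda>xs. Q xs \<and> \<not> (\<forall>i\<in>H. xs!i = sel cand M i))"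
        have blk: "block cand M H ?\<Psi> = PsiQ m cand Q'"
          unfolding Q'_def by (rule block_PsiQ[OF psiM Hm])
        have ne: "\<not> prog_equiv updDen qryDen emp P PM" using False verify_exact by simp
        have fail: "exec updDen qryDen emp P \<omega> \<noteq> exec updDen qryDen emp PM \<omega>"
          using mfi_min[OF ne] by (simp add: is_min_failing_def \<omega>_def)
        have Q'x: "Q' xs0"
        proof -
          have "\<not> (\<forall>i\<in>H. xs0!i = sel cand M i)"
          proof
            assume agr: "\<forall>i\<in>H. xs0!i = sel cand M i"
            have "exec updDen qryDen emp PM \<omega> = exec updDen qryDen emp (fill skU skQ a) \<omega>"
              unfolding PM_def decode_def
            proof (rule exec_local[OF local], intro allI impI)
              fix i assume i: "i < m"
                and o: "owner i \<in> Inl ` fst ` set (fst \<omega>) \<union> {Inr (fst (snd \<omega>))}"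
              hence "i \<in> H" by (auto simp: H_def invoked_holes_def)
              hence "xs0 ! i = sel cand M i" using agr by blast
              hence "sel cand M i = js i" using i by (simp add: xs0_def)
              thus "cand i ! sel cand M i = a i" using js[OF i] by simp
            qed
            also have "\<dots> = exec updDen qryDen emp P \<omega>" using eqa unfolding prog_equiv_def by blast
            finally show False using fail by simp
          qed
          thus ?thesis using Qx by (simp add: Q'_def)
        qed
        have sub: "cset m cand Q' \<subset> cset m cand Q"
        proof
          show "cset m cand Q' \<subseteq> cset m cand Q" by (auto simp: cset_def Q'_def)
          have "selL cand m M \<in> cset m cand Q"
            using PM sel_prop[OF psiM] by (auto simp: cset_def PsiQ_def selL_def)
          moreover have "selL cand m M \<notin> cset m cand Q'"
            using Hm by (auto simp: cset_def Q'_def selL_def)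
          ultimately show "cset m cand Q' \<noteq> cset m cand Q" by blast
        qed
        have lt: "card (cset m cand Q') < n"
          using psubset_card_mono[OF cset_finite sub] cn by simp
        have IH: "(\<exists>r. ?run (PsiQ m cand Q') r) \<and> (\<forall>r. ?run (PsiQ m cand Q') r \<longrightarrow> ?good r)"
          using less.IH[OF lt] Q'x by blast
        have blk': "block cand (pick ?\<Psi>) (invoked_holes m owner (mfi P (decode cand skU skQ (pick ?\<Psi>)))) ?\<Psi>
                    = PsiQ m cand Q'"
          using blk by (simp add: H_def \<omega>_def PM_def M_def)
        have nv: "\<not> verify P (decode cand skU skQ (pick ?\<Psi>))" using False by (simp add: PM_def M_def)
        have ex: "\<exists>r. ?run ?\<Psi> r"
        proof -
          from conjunct1[OF IH] obtain r where r: "?run (PsiQ m cand Q') r" by (elim exE)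
          have "?run (block cand (pick ?\<Psi>) (invoked_holes m owner (mfi P (decode cand skU skQ (pick ?\<Psi>)))) ?\<Psi>) r"
            unfolding blk' by (rule r)
          hence "?run ?\<Psi> r" by (intro cs_run.refine[of "PsiQ m cand Q"] sat nv)
          thus ?thesis by blast
        qed
        have "\<forall>r. ?run ?\<Psi> r \<longrightarrow> ?good r"
        proof (intro allI impI)
          fix r assume "?run ?\<Psi> r"
          thus "?good r"
          proof (cases rule: cs_run.cases)
            case unsat thus ?thesis using sat by blast
          next
            case found thus ?thesis using nv by simp
          next
            case refine
            hence "?run (PsiQ m cand Q') r" by (simp only: blk')
            thus ?thesis using IH by blast
          qed
        qed
        thus ?thesis using ex by blast
      qed
    qed
  qed
  have p0: "psi0 m cand = PsiQ m cand (\<lambda>_. True)" by (auto simp: PsiQ_def)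
  have "(\<exists>r. ?run (PsiQ m cand (\<lambda>_. True)) r) \<and> (\<forall>r. ?run (PsiQ m cand (\<lambda>_. True)) r \<longrightarrow> ?good r)"
    using main[of "card (cset m cand (\<lambda>_. True))"] by blast
  thus ?thesis unfolding complete_sketch_returns_def p0 .
qed

end
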